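(* For $\alpha>0$, $t>0$ and $x\in\mathbb{R}$, $$\mathcal{H}_\alpha(x,t)=t^{\alpha}e^{\frac{x^2}{2t}}\left(\mathcal{D}_{-}^{\alpha}\, e^{-\frac{(\cdot)^2}{2t}}\right)(x),$$ where the Liouville fractional derivative is taken in the variable $x$.
   Context: $U(a,z)$ is the standard (Whittaker) parabolic cylinder function, $D_\nu(z)=U(-\nu-\tfrac12,z)$, and $\mathcal{H}_\alpha(x,t)=t^{\frac{\alpha}{2}}e^{\frac{x^2}{4t}}U(-\alpha-\tfrac12,\tfrac{x}{\sqrt t})$ for $t>0$. The Liouville right-sided fractional integral is $(I_-^{\beta}\varphi)(x)=\frac{1}{\Gamma(\beta)}\int_x^\infty (y-x)^{\beta-1}\varphi(y)\,dy$ for $\beta>0$. The Liouville fractional derivative is: if $\alpha>0$ is not an integer and $m=[\alpha]+1$, $(\mathcal{D}_-^{\alpha}\varphi)(x)=(-1)^m\frac{d^m}{dx^m}(I_-^{m-\alpha}\varphi)(x)$; if $\alpha=m\in\mathbb{N}$, $(\mathcal{D}_-^{\alpha}\varphi)(x)=(-1)^m\varphi^{(m)}(x)$. *)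

theory Defs
  imports "HOL-Analysis.Analysis"
begin

definition kummerM :: "real \<Rightarrow> real \<Rightarrow> real \<Rightarrow> real" where
  "kummerM a b z = (\<Sum>n. pochhammer a n / (pochhammer b n * fact n) * z ^ n)"

text \<open>Whittaker's parabolic cylinder function U(a,z) for real a, z, via DLMF 12.4.1,
  12.7.12, 12.7.13, 12.2.6, 12.2.7 (rGamma = 1/Gamma, vanishing at the poles).\<close>
definition pcU :: "real \<Rightarrow> real \<Rightarrow> real" where
  "pcU a z =
     sqrt pi * rGamma (3/4 + a/2) / 2 powr (a/2 + 1/4)
       * (exp (- (z^2) / 4) * kummerM (a/2 + 1/4) (1/2) (z^2 / 2))
   - sqrt pi * rGamma (1/4 + a/2) / 2 powr (a/2 - 1/4)
       * (z * exp (- (z^2) / 4) * kummerM (a/2 + 3/4) (3/2) (z^2 / 2))"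

definition calH :: "real \<Rightarrow> real \<Rightarrow> real \<Rightarrow> real" where
  "calH \<alpha> x t = t powr (\<alpha> / 2) * exp (x^2 / (4 * t)) * pcU (- \<alpha> - 1/2) (x / sqrt t)"

definition liouville_int_minus :: "real \<Rightarrow> (real \<Rightarrow> real) \<Rightarrow> real \<Rightarrow> real" where
  "liouville_int_minus \<beta> \<phi> x =
     (LBINT y:{x<..}. (y - x) powr (\<beta> - 1) * \<phi> y) / Gamma \<beta>"

definition liouville_deriv_minus :: "real \<Rightarrow> (real \<Rightarrow> real) \<Rightarrow> real \<Rightarrow> real" where
  "liouville_deriv_minus \<alpha> \<phi> x =
     (if \<alpha> \<in> \<nat> then (-1) ^ nat \<lfloor>\<alpha>\<rfloor> * (deriv ^^ nat \<lfloor>\<alpha>\<rfloor>) \<phi> x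
      else (let m = nat \<lfloor>\<alpha>\<rfloor> + 1 in
            (-1) ^ m * (deriv ^^ m) (liouville_int_minus (real m - \<alpha>) \<phi>) x))"

end

theory Submission
  imports Defs
begin

definition b0 :: "real \<Rightarrow> real" where
  "b0 \<beta> = sqrt pi * rGamma ((\<beta>+1)/2) / 2 powr (\<beta>/2)"
definition b1 :: "real \<Rightarrow> real" where
  "b1 \<beta> = sqrt pi * rGamma (\<beta>/2) / 2 powr (\<beta>/2 - 1/2)"

fun bc :: "real \<Rightarrow> nat \<Rightarrow> real" where
  "bc \<beta> 0 = b0 \<beta>"
| "bc \<beta> (Suc 0) = b1 \<beta>"
| "bc \<beta> (Suc (Suc k)) = (\<beta> + real k) * bc \<beta> k"

definition cc :: "real \<Rightarrow> nat \<Rightarrow> real" where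
  "cc \<beta> k = (-1)^k * bc \<beta> k / fact k"

definition SS :: "real \<Rightarrow> real \<Rightarrow> real" where
  "SS \<beta> z = (\<Sum>k. cc \<beta> k * z^k)"

definition Phi :: "real \<Rightarrow> real \<Rightarrow> real" where
  "Phi \<beta> z = exp (-(z^2)/2) * SS \<beta> z"

lemma summable_two_step:
  fixes f :: "nat \<Rightarrow> real"
  assumes "\<And>k. k \<ge> N \<Longrightarrow> \<bar>f (Suc (Suc k))\<bar> \<le> (1/4) * \<bar>f k\<bar>"
  shows "summable (\<lambda>k. \<bar>f k\<bar>)"
proof -
  define C where "C = max (\<bar>f N\<bar> * 2^N) (\<bar>f (Suc N)\<bar> * 2^(Suc N))"
  have *: "\<bar>f k\<bar> \<le> C * (1/2)^k" if "k \<ge> N" for k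
    using that
  proof (induction k rule: less_induct)
    case (less k)
    show ?case
    proof (cases "k \<ge> N + 2")
      case True
      define j where "j = k - 2"
      have k: "k = Suc (Suc j)" "j \<ge> N" using True unfolding j_def by arith+
      have "\<bar>f k\<bar> \<le> 1/4 * \<bar>f j\<bar>" using assms k by simp
      also have "\<dots> \<le> 1/4 * (C * (1/2)^j)" using less.IH[of j] k by simp
      also have "\<dots> = C * (1/2)^k" using k by simp
      finally show ?thesis .
    next
      case False
      then have "k = N \<or> k = Suc N" using less.prems by arith
      then show ?thesis
      proof
        assume "k = N"
        have "\<bar>f k\<bar> = (\<bar>f N\<bar> * 2^N) * (1/2)^N" using \<open>k = N\<close>
          by (simp add: power_one_over)
        also have "\<dots> \<le> C * (1/2)^N" by (intro mult_right_mono) (auto simp: C_def)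
        finally show ?thesis using \<open>k = N\<close> by simp
      next
        assume "k = Suc N"
        have "\<bar>f k\<bar> = (\<bar>f (Suc N)\<bar> * 2^(Suc N)) * (1/2)^(Suc N)" using \<open>k = Suc N\<close>
          by (simp add: power_one_over)
        also have "\<dots> \<le> C * (1/2)^(Suc N)" by (intro mult_right_mono) (auto simp: C_def)
        finally show ?thesis using \<open>k = Suc N\<close> by simp
      qed
    qed
  qed
  have g: "summable (\<lambda>k. C * (1/2::real)^k)"
    by (intro summable_mult summable_geometric) simp
  show ?thesis
  proof (rule summable_comparison_test[OF _ g])
    show "\<exists>N'. \<forall>n\<ge>N'. norm \<bar>f n\<bar> \<le> C * (1/2)^n" using * by auto
  qed
qed

lemma fact2: "(fact (Suc (Suc k)) :: real) = ((real k + 1) * (real k + 2)) * fact k"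
  by (simp add: fact_Suc algebra_simps)

lemma cc2: "cc \<beta> (Suc (Suc k)) = (\<beta> + k) / ((real k + 1) * (real k + 2)) * cc \<beta> k"
  unfolding cc_def fact2 by simp

lemma cc_ratio:
  "\<bar>cc \<beta> (Suc (Suc k)) * z^(Suc (Suc k))\<bar> =
     (\<bar>\<beta> + k\<bar> * z^2 / ((real k + 1) * (real k + 2))) * \<bar>cc \<beta> k * z^k\<bar>"
proof -
  have "cc \<beta> (Suc (Suc k)) * z^(Suc (Suc k)) =
     ((\<beta> + k) * z^2 / ((real k + 1) * (real k + 2))) * (cc \<beta> k * z^k)"
    unfolding cc2 by (simp add: power2_eq_square)
  then show ?thesis by (simp add: abs_mult)
qed

lemma summable_cc_abs: "summable (\<lambda>k. \<bar>cc \<beta> k * z^k\<bar>)"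
proof -
  define N :: nat where "N = nat \<lceil>\<bar>\<beta>\<bar> + 8 * z^2\<rceil>"
  show ?thesis
  proof (rule summable_two_step[of N])
    fix k assume k: "k \<ge> N"
    have k1: "\<bar>\<beta>\<bar> \<le> real k" and k2: "8 * z^2 \<le> real k"
    proof -
      have "\<bar>\<beta>\<bar> + 8 * z^2 \<le> real N" unfolding N_def by (rule real_nat_ceiling_ge)
      moreover have "real N \<le> real k" using k by simp
      moreover have "0 \<le> z^2" by simp
      ultimately show "\<bar>\<beta>\<bar> \<le> real k" "8 * z^2 \<le> real k" by linarith+
    qed
    have "\<bar>\<beta> + k\<bar> \<le> 2 * (real k + 1)" using k1 abs_triangle_ineq[of \<beta> "real k"] by simp
    have "\<bar>\<beta> + k\<bar> * z^2 \<le> (2 * (real k + 1)) * z^2"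
      using \<open>\<bar>\<beta> + k\<bar> \<le> 2 * (real k + 1)\<close> by (rule mult_right_mono) simp
    moreover have "(real k + 1) * (8 * z^2) \<le> (real k + 1) * (real k + 2)"
      using k2 by (intro mult_left_mono) linarith+
    ultimately have r0: "4 * (\<bar>\<beta> + k\<bar> * z^2) \<le> (real k + 1) * (real k + 2)"
      by (simp add: algebra_simps)
    have pos: "(real k + 1) * (real k + 2) > 0" by simp
    have r: "\<bar>\<beta> + k\<bar> * z^2 / ((real k + 1) * (real k + 2)) \<le> 1/4"
      using pos r0 by (subst pos_divide_le_eq) linarith+
    show "\<bar>cc \<beta> (Suc (Suc k)) * z^(Suc (Suc k))\<bar> \<le> 1/4 * \<bar>cc \<beta> k * z^k\<bar>"
      unfolding cc_ratio by (rule mult_right_mono[OF r]) simp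
  qed
qed

lemma summable_cc: "summable (\<lambda>k. cc \<beta> k * z^k)"
  by (rule summable_rabs_cancel[OF summable_cc_abs])


lemma b0_shift: "b0 (\<beta> - 1) = b1 \<beta>"
  by (simp add: b0_def b1_def diff_divide_distrib)

lemma b1_shift: "b1 (\<beta> - 1) = (\<beta> - 1) * b0 \<beta>"
proof -
  have r: "rGamma ((\<beta> - 1)/2) = (\<beta> - 1)/2 * rGamma ((\<beta> + 1)/2)"
  proof -
    have e: "(\<beta> - 1)/2 + 1 = (\<beta> + 1)/2" by (simp add: field_simps)
    show ?thesis using rGamma_plus1[of "(\<beta> - 1)/2"] unfolding e by simp
  qed
  have p: "(2::real) powr ((\<beta> - 1)/2 - 1/2) = 2 powr (\<beta>/2) / 2"
    by (simp add: powr_diff diff_divide_distrib)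
  show ?thesis unfolding b0_def b1_def r p by simp
qed

lemma bc_shift: "bc (\<beta> - 1) (Suc k) = (\<beta> - 1) * bc \<beta> k"
proof -
  have "bc (\<beta> - 1) (Suc k) = (\<beta> - 1) * bc \<beta> k \<and>
        bc (\<beta> - 1) (Suc (Suc k)) = (\<beta> - 1) * bc \<beta> (Suc k)"
  proof (induction k)
    case 0
    then show ?case by (simp add: b1_shift b0_shift)
  next
    case (Suc k)
    have "bc (\<beta> - 1) (Suc (Suc (Suc k))) = (\<beta> - 1 + real (Suc k)) * bc (\<beta> - 1) (Suc k)"
      by simp
    also have "\<dots> = (\<beta> + real k) * bc (\<beta> - 1) (Suc k)" by simp
    also have "\<dots> = (\<beta> + real k) * ((\<beta> - 1) * bc \<beta> k)"
      by (simp only: conjunct1[OF Suc.IH])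
    also have "\<dots> = (\<beta> - 1) * ((\<beta> + real k) * bc \<beta> k)" by (simp only: mult_ac)
    also have "\<dots> = (\<beta> - 1) * bc \<beta> (Suc (Suc k))" by simp
    finally show ?case using Suc.IH by simp
  qed
  then show ?thesis by simp
qed

lemma SS_sums: "(\<lambda>n. cc \<beta> n * z^n) sums SS \<beta> z"
  unfolding SS_def by (rule summable_sums[OF summable_cc])

lemma aux_div: "(real j + 2) * ((b + real j) / ((real j + 1) * (real j + 2)) * (s * c / fact j)) = s * ((b + real j) * c) / ((real j + 1) * fact j)"
proof -
  have h: "real j + 2 \<noteq> 0" by linarith
  have "(real j + 2) * ((b + real j) / ((real j + 1) * (real j + 2)) * (s * c / fact j)) =
        ((real j + 2) / (real j + 2)) * ((b + real j) * (s * c)) / ((real j + 1) * fact j)"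
    by (simp only: times_divide_eq_left times_divide_eq_right divide_divide_eq_left mult_ac)
  also have "\<dots> = s * ((b + real j) * c) / ((real j + 1) * fact j)" using h by (simp add: mult_ac)
  finally show ?thesis .
qed

lemma t_comb: fixes x y D w :: real shows "x/D*w - (-(y/D))*w = (x+y)/D*w"
  by (simp add: add_divide_distrib distrib_right)
lemma aux_comb:
  fixes F D a s b c w :: real
  assumes "F \<noteq> 0" "a + 1 \<noteq> 0" "D = (a+1)*F"
  shows "s*((b+a)*c)/D * w = s*c/F*w - (-(s*((b-1)*c)/D)) * w"
proof -
  have 1: "s*c/F = (s*c*(a+1))/D" using assms by simp
  have 2: "(s*c*(a+1)) + s*((b-1)*c) = s*((b+a)*c)" by (simp add: algebra_simps)
  show ?thesis unfolding 1 t_comb 2 ..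
qed

lemma SS_deriv: "DERIV (SS \<beta>) z :> (z * SS \<beta> z - SS (\<beta> - 1) z)"
proof -
  have d: "DERIV (SS \<beta>) z :> (\<Sum>n. diffs (cc \<beta>) n * z^n)"
    unfolding SS_def[abs_def]
    by (rule termdiffs_strong[OF summable_cc[of \<beta> "\<bar>z\<bar> + 1"]]) simp
  define g where "g n = (if n = 0 then 0 else cc \<beta> (n - 1) * z^n)" for n
  have "(\<lambda>n. z * (cc \<beta> n * z^n)) sums (z * SS \<beta> z)"
    by (rule sums_mult[OF SS_sums])
  then have "(\<lambda>n. g (Suc n)) sums (z * SS \<beta> z)"
    by (simp add: g_def mult_ac)
  then have g: "g sums (z * SS \<beta> z)"
    by (subst (asm) sums_Suc_iff) (simp add: g_def)
  have s: "(\<lambda>n. g n - cc (\<beta> - 1) n * z^n) sums (z * SS \<beta> z - SS (\<beta> - 1) z)"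
    by (rule sums_diff[OF g SS_sums])
  have eq: "diffs (cc \<beta>) n * z^n = g n - cc (\<beta> - 1) n * z^n" for n
  proof (cases n)
    case 0
    then show ?thesis by (simp add: diffs_def g_def cc_def b0_shift)
  next
    case (Suc j)
    have f1: "(fact (Suc j) :: real) = (real j + 1) * fact j" by simp
    have "diffs (cc \<beta>) n = real (Suc (Suc j)) * ((\<beta> + j) / ((real j + 1) * (real j + 2)) * cc \<beta> j)"
      using Suc by (simp add: diffs_def cc2)
    also have "\<dots> = (-1)^j * ((\<beta> + j) * bc \<beta> j) / fact (Suc j)"
    proof -
      have "real (Suc (Suc j)) = real j + 2" by simp
      then show ?thesis unfolding f1 cc_def by (simp only: aux_div)
    qed
    finally have d1: "diffs (cc \<beta>) n = (-1)^j * ((\<beta> + j) * bc \<beta> j) / fact (Suc j)" .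
    have c1: "cc (\<beta> - 1) n = - ((-1)^j * ((\<beta> - 1) * bc \<beta> j) / fact (Suc j))"
      using Suc by (simp add: cc_def bc_shift)
    have g1: "g n = (-1)^j * bc \<beta> j / fact j * z^n"
      using Suc by (simp add: g_def cc_def)
    show ?thesis unfolding d1 c1 g1
      by (rule aux_comb[OF _ _ f1]) simp_all
  qed
  have "(\<Sum>n. diffs (cc \<beta>) n * z^n) = z * SS \<beta> z - SS (\<beta> - 1) z"
    using s unfolding eq[symmetric] by (rule sums_unique[symmetric])
  with d show ?thesis by simp
qed

lemma Phi_deriv: "DERIV (Phi \<beta>) z :> - Phi (\<beta> - 1) z"
proof -
  have e: "DERIV (\<lambda>z. exp (-(z^2)/2)) z :> exp (-(z^2)/2) * (-z)"
    by (auto intro!: derivative_eq_intros)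
  have "DERIV (\<lambda>z. exp (-(z^2)/2) * SS \<beta> z) z :>
      exp (-(z^2)/2) * (-z) * SS \<beta> z + (z * SS \<beta> z - SS (\<beta> - 1) z) * exp (-(z^2)/2)"
    by (rule DERIV_mult[OF e SS_deriv])
  then show ?thesis unfolding Phi_def[abs_def] by (simp add: algebra_simps)
qed


lemma bc_zero_Suc: "bc 0 (Suc k) = 0"
proof -
  have "bc 0 (Suc k) = 0 \<and> bc 0 (Suc (Suc k)) = 0"
    by (induction k) (simp_all add: b1_def)
  then show ?thesis by simp
qed

lemma b0_zero: "b0 0 = 1"
  by (simp add: b0_def rGamma_inverse_Gamma Gamma_one_half_real)

lemma SS_zero: "SS 0 z = 1"
proof -
  have "(\<lambda>k. cc 0 k * z^k) = (\<lambda>k. if k = 0 then 1 else 0)"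
  proof
    fix k show "cc 0 k * z^k = (if k = 0 then 1 else 0)"
      by (cases k) (simp_all add: cc_def b0_zero bc_zero_Suc)
  qed
  then have "(\<lambda>k. cc 0 k * z^k) sums 1"
    using sums_single[of 0 "\<lambda>_. 1::real"] by simp
  then show ?thesis using SS_sums sums_unique2 by blast
qed

lemma Phi_zero: "Phi 0 z = exp (-(z^2)/2)"
  by (simp add: Phi_def SS_zero)

lemma bc_even: "bc \<beta> (2*j) = b0 \<beta> * pochhammer (\<beta>/2) j * 2^j"
proof (induction j)
  case 0 then show ?case by simp
next
  case (Suc j)
  have "bc \<beta> (2 * Suc j) = (\<beta> + real (2*j)) * bc \<beta> (2*j)" by simp
  also have "\<dots> = b0 \<beta> * ((\<beta>/2 + real j) * pochhammer (\<beta>/2) j) * 2^(Suc j)"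
    unfolding Suc.IH by (simp add: algebra_simps)
  also have "\<dots> = b0 \<beta> * pochhammer (\<beta>/2) (Suc j) * 2^(Suc j)"
    by (simp add: pochhammer_rec')
  finally show ?case .
qed

lemma bc_odd: "bc \<beta> (2*j+1) = b1 \<beta> * pochhammer ((\<beta>+1)/2) j * 2^j"
proof (induction j)
  case 0 then show ?case by simp
next
  case (Suc j)
  have "bc \<beta> (2 * Suc j + 1) = (\<beta> + real (2*j+1)) * bc \<beta> (2*j+1)" by simp
  also have "\<dots> = b1 \<beta> * (((\<beta>+1)/2 + real j) * pochhammer ((\<beta>+1)/2) j) * 2^(Suc j)"
    unfolding Suc.IH by (simp add: algebra_simps)
  also have "\<dots> = b1 \<beta> * pochhammer ((\<beta>+1)/2) (Suc j) * 2^(Suc j)"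
    by (simp add: pochhammer_rec')
  finally show ?case .
qed

lemma fact_even: "(fact (2*j) :: real) = 4^j * fact j * pochhammer (1/2) j"
  by (simp add: fact_double power_mult)

lemma poch_three_halves: "pochhammer (3/2::real) j = (2 * real j + 1) * pochhammer (1/2) j"
proof -
  have "pochhammer (1/2::real) (Suc j) = 1/2 * pochhammer (3/2) j"
    using pochhammer_rec[of "1/2::real" j] by simp
  moreover have "pochhammer (1/2::real) (Suc j) = (1/2 + real j) * pochhammer (1/2) j"
    by (rule pochhammer_rec')
  ultimately show ?thesis by (simp add: algebra_simps)
qed

lemma fact_odd: "(fact (2*j+1) :: real) = 4^j * fact j * pochhammer (3/2) j"
proof -
  have "(fact (2*j+1) :: real) = (2 * real j + 1) * fact (2*j)"
    by simp
  then show ?thesis unfolding fact_even poch_three_halves by (simp add: algebra_simps)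
qed

lemma summable_even_sub:
  fixes f :: "nat \<Rightarrow> real"
  assumes "summable (\<lambda>k. \<bar>f k\<bar>)"
  shows "summable (\<lambda>j. f (2*j))"
proof -
  define h where "h n = (if even n then f n else 0)" for n
  have "summable (\<lambda>n. norm (h n))"
    by (rule summable_comparison_test[OF _ assms]) (auto simp: h_def)
  then have sh: "summable h" by (rule summable_norm_cancel)
  have sm: "strict_mono (\<lambda>j::nat. 2*j)" by (auto simp: strict_mono_def)
  have "summable (\<lambda>j. h (2*j))"
    by (subst summable_mono_reindex[OF sm]) (auto simp: h_def sh elim!: evenE)
  then show ?thesis by (simp add: h_def)
qed

lemma summable_odd_sub:
  fixes f :: "nat \<Rightarrow> real"
  assumes "summable (\<lambda>k. \<bar>f k\<bar>)"
  shows "summable (\<lambda>j. f (2*j+1))"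
proof -
  have "summable (\<lambda>k. \<bar>f (Suc k)\<bar>)"
    using assms by (subst summable_Suc_iff)
  from summable_even_sub[OF this] show ?thesis by simp
qed

lemma SS_kummer:
  "SS \<beta> z = b0 \<beta> * kummerM (\<beta>/2) (1/2) (z^2/2) - b1 \<beta> * z * kummerM ((\<beta>+1)/2) (3/2) (z^2/2)"
proof -
  define F where "F j = cc \<beta> (2*j) * z^(2*j)" for j
  define G where "G j = cc \<beta> (2*j+1) * z^(2*j+1)" for j
  define TA where "TA j = pochhammer (\<beta>/2) j / (pochhammer (1/2) j * fact j) * (z^2/2)^j" for j
  define TB where "TB j = pochhammer ((\<beta>+1)/2) j / (pochhammer (3/2) j * fact j) * (z^2/2)^j" for j
  have p1: "pochhammer (1/2::real) j \<noteq> 0" for j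
    by (simp add: pochhammer_eq_0_iff)
  have p3: "pochhammer (3/2::real) j \<noteq> 0" for j
    by (simp add: pochhammer_eq_0_iff)
  have four: "(4::real)^j = 2^j * 2^j" for j by (simp add: power_mult_distrib[symmetric])
  have F_eq: "F j = b0 \<beta> * TA j" for j
  proof -
    have "F j = b0 \<beta> * pochhammer (\<beta>/2) j * 2^j / (4^j * fact j * pochhammer (1/2) j) * (z^2)^j"
      unfolding F_def cc_def bc_even fact_even by (simp add: power_mult)
    also have "\<dots> = b0 \<beta> * TA j"
      unfolding TA_def four using p1[of j] by (simp add: power_divide power_mult_distrib field_simps)
    finally show ?thesis .
  qed
  have G_eq: "G j = - (b1 \<beta> * z) * TB j" for j
  proof -
    have "G j = - (b1 \<beta> * pochhammer ((\<beta>+1)/2) j * 2^j / (4^j * fact j * pochhammer (3/2) j) * (z^2)^j * z)"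
      unfolding G_def cc_def bc_odd fact_odd by (simp add: power_mult)
    also have "\<dots> = - (b1 \<beta> * z) * TB j"
      unfolding TB_def four using p3[of j] by (simp add: power_divide power_mult_distrib field_simps)
    finally show ?thesis .
  qed
  have sF: "summable F"
    unfolding F_def using summable_even_sub[OF summable_cc_abs[of \<beta> z]] by simp
  have sG: "summable G"
    unfolding G_def using summable_odd_sub[OF summable_cc_abs[of \<beta> z]] by simp
  have FA: "F sums (b0 \<beta> * kummerM (\<beta>/2) (1/2) (z^2/2))"
  proof (cases "b0 \<beta> = 0")
    case False
    have "summable (\<lambda>j. F j / b0 \<beta>)" by (rule summable_divide[OF sF])
    then have "summable TA" using False by (simp add: F_eq)
    then have "TA sums kummerM (\<beta>/2) (1/2) (z^2/2)"
      unfolding kummerM_def TA_def[abs_def] by (rule summable_sums)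
    then show ?thesis unfolding F_eq[abs_def] by (rule sums_mult)
  next
    case True
    then show ?thesis unfolding F_eq[abs_def] by simp
  qed
  have GB: "G sums (- (b1 \<beta> * z) * kummerM ((\<beta>+1)/2) (3/2) (z^2/2))"
  proof (cases "b1 \<beta> * z = 0")
    case False
    have "summable (\<lambda>j. G j / (- (b1 \<beta> * z)))" by (rule summable_divide[OF sG])
    then have "summable TB" using False by (simp add: G_eq)
    then have "TB sums kummerM ((\<beta>+1)/2) (3/2) (z^2/2)"
      unfolding kummerM_def TB_def[abs_def] by (rule summable_sums)
    then show ?thesis unfolding G_eq[abs_def] by (rule sums_mult)
  next
    case True
    have "G = (\<lambda>j. 0)" by (rule ext) (simp only: G_eq True minus_zero mult_zero_left)
    then show ?thesis unfolding True by simp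
  qed
  have "(\<lambda>n. if even n then F (n div 2) else G ((n - 1) div 2)) sums
          (- (b1 \<beta> * z) * kummerM ((\<beta>+1)/2) (3/2) (z^2/2) + b0 \<beta> * kummerM (\<beta>/2) (1/2) (z^2/2))"
    by (rule sums_if[OF GB FA])
  moreover have "(\<lambda>n. if even n then F (n div 2) else G ((n - 1) div 2)) = (\<lambda>n. cc \<beta> n * z^n)"
  proof
    fix n show "(if even n then F (n div 2) else G ((n - 1) div 2)) = cc \<beta> n * z^n"
      by (cases "even n") (auto simp: F_def G_def elim!: evenE oddE)
  qed
  ultimately have X: "(\<lambda>n. cc \<beta> n * z^n) sums
          (- (b1 \<beta> * z) * kummerM ((\<beta>+1)/2) (3/2) (z^2/2) + b0 \<beta> * kummerM (\<beta>/2) (1/2) (z^2/2))"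
    by simp
  from sums_unique2[OF SS_sums X] show ?thesis by (simp add: algebra_simps)
qed


lemma Gamma_integral_real_pos:
  assumes "a > (0::real)"
  shows "((\<lambda>u. u powr (a - 1) / exp u) has_integral Gamma a) {0<..}"
proof -
  have "((\<lambda>u. u powr (a - 1) / exp u) has_integral Gamma a) {0..}"
    by (rule Gamma_integral_real) fact
  hence "((\<lambda>u. if u \<in> {0<..} then u powr (a - 1) / exp u else 0) has_integral Gamma a) {0..}"
    by (rule has_integral_spike [of "{0}", rotated 2]) auto
  also have "?this = ?thesis"
    by (subst has_integral_restrict) auto
  finally show ?thesis .
qed

lemma gauss_moment_HK:
  assumes g: "\<gamma> > (0::real)"
  shows "((\<lambda>s. s powr (\<gamma> - 1) * exp (-(s^2)/2)) has_integral (2 powr (\<gamma>/2 - 1) * Gamma (\<gamma>/2))) {0<..}"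
proof -
  define f where "f u = u powr (\<gamma>/2 - 1) / exp u" for u :: real
  have fG: "(f has_integral Gamma (\<gamma>/2)) {0<..}"
    unfolding f_def using Gamma_integral_real_pos[of "\<gamma>/2"] g by simp
  have fabs: "f absolutely_integrable_on {0<..}"
  proof (rule nonnegative_absolutely_integrable_1)
    show "f integrable_on {0<..}" using fG by (rule has_integral_integrable)
  qed (simp add: f_def)
  have img: "(\<lambda>s. s^2/2) ` {0<..} = {(0::real)<..}"
  proof (intro equalityI subsetI)
    fix u :: real assume "u \<in> {0<..}"
    then have "u = (sqrt (2*u))^2/2" "sqrt (2*u) \<in> {0<..}" by auto
    then show "u \<in> (\<lambda>s. s^2/2) ` {0<..}" by (rule image_eqI)
  qed auto
  have der: "((\<lambda>s. s^2/2) has_field_derivative s) (at s within {0<..})" for s :: real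
    by (auto intro!: derivative_eq_intros)
  have inj: "inj_on (\<lambda>s::real. s^2/2) {0<..}"
    by (auto simp: inj_on_def power2_eq_iff_nonneg)
  have cv: "(\<lambda>s. \<bar>s\<bar> * f (s^2/2)) absolutely_integrable_on {0<..} \<and>
            integral {0<..} (\<lambda>s. \<bar>s\<bar> * f (s^2/2)) = Gamma (\<gamma>/2)"
    using has_absolute_integral_change_of_variables_1'[OF _ der inj, of f "Gamma (\<gamma>/2)"]
    unfolding img using fabs fG by (simp add: integral_unique)
  then have h1: "((\<lambda>s. \<bar>s\<bar> * f (s^2/2)) has_integral Gamma (\<gamma>/2)) {0<..}"
  proof -
    have "(\<lambda>s. \<bar>s\<bar> * f (s^2/2)) integrable_on {0<..}"
      by (rule set_lebesgue_integral_eq_integral(1)[OF conjunct1[OF cv]])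
    from integrable_integral[OF this] show ?thesis unfolding conjunct2[OF cv] .
  qed
  have eq: "2 powr (\<gamma>/2 - 1) * (\<bar>s\<bar> * f (s^2/2)) = s powr (\<gamma> - 1) * exp (-(s^2)/2)"
    if "s \<in> {0<..}" for s :: real
  proof -
    from that have s: "s > 0" by simp
    have "(s^2/2) powr (\<gamma>/2 - 1) = (s^2) powr (\<gamma>/2 - 1) / 2 powr (\<gamma>/2 - 1)"
      using s by (simp add: powr_divide)
    also have "(s^2) powr (\<gamma>/2 - 1) = s powr (\<gamma> - 2)"
    proof -
      have "s^2 = s powr 2" using s by (simp add: powr_numeral)
      then have "(s^2) powr (\<gamma>/2 - 1) = s powr (2 * (\<gamma>/2 - 1))" by (simp add: powr_powr)
      also have "2 * (\<gamma>/2 - 1) = \<gamma> - 2" by simp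
      finally show ?thesis .
    qed
    finally have "(s^2/2) powr (\<gamma>/2 - 1) = s powr (\<gamma> - 2) / 2 powr (\<gamma>/2 - 1)" .
    moreover have "s * s powr (\<gamma> - 2) = s powr (\<gamma> - 1)"
    proof -
      have "s * s powr (\<gamma> - 2) = s powr 1 * s powr (\<gamma> - 2)" using s by simp
      also have "\<dots> = s powr (1 + (\<gamma> - 2))" by (simp only: powr_add)
      also have "1 + (\<gamma> - 2) = \<gamma> - 1" by simp
      finally show ?thesis .
    qed
    ultimately show ?thesis using s
      by (simp add: f_def exp_minus field_simps abs_of_pos)
  qed
  show ?thesis
    using has_integral_mult_right[OF h1, of "2 powr (\<gamma>/2 - 1)"] eq
    by (subst (asm) has_integral_cong[of _ _ "\<lambda>s. s powr (\<gamma> - 1) * exp (-(s^2)/2)"]) (auto simp: mult_ac)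
qed

lemma gauss_moment:
  assumes g: "\<gamma> > (0::real)"
  shows "has_bochner_integral lborel (\<lambda>s. indicator {0<..} s * (s powr (\<gamma> - 1) * exp (-(s^2)/2)))
           (2 powr (\<gamma>/2 - 1) * Gamma (\<gamma>/2))"
proof -
  let ?F = "\<lambda>s::real. s powr (\<gamma> - 1) * exp (-(s^2)/2)"
  have hk: "(?F has_integral (2 powr (\<gamma>/2 - 1) * Gamma (\<gamma>/2))) {0<..}"
    by (rule gauss_moment_HK[OF g])
  have nn: "integral\<^sup>N lborel (\<lambda>x. indicator {0<..} x * ?F x) = ennreal (2 powr (\<gamma>/2 - 1) * Gamma (\<gamma>/2))"
    by (rule nn_integral_has_integral_lebesgue[OF _ hk]) simp
  have nn': "(\<integral>\<^sup>+x. ennreal (indicator {0<..} x * ?F x) \<partial>lborel) = ennreal (2 powr (\<gamma>/2 - 1) * Gamma (\<gamma>/2))"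
    unfolding nn[symmetric] by (intro nn_integral_cong) (auto simp: indicator_def)
  have "integrable lborel (\<lambda>x. indicator {0<..} x * ?F x) \<and>
        integral\<^sup>L lborel (\<lambda>x. indicator {0<..} x * ?F x) = 2 powr (\<gamma>/2 - 1) * Gamma (\<gamma>/2)"
    by (rule nn_integral_eq_integrable[THEN iffD1, OF _ _ _ nn']) (use g in \<open>auto simp: indicator_def\<close>)
  then show ?thesis by (simp add: has_bochner_integral_iff)
qed


lemma dup_real:
  assumes x: "x > (0::real)"
  shows "Gamma x * Gamma (x + 1/2) = 2 powr (1 - 2*x) * sqrt pi * Gamma (2*x)"
proof -
  have n1: "complex_of_real x \<notin> \<int>\<^sub>\<le>\<^sub>0"
    unfolding of_real_in_nonpos_Ints_iff using x nonpos_Ints_nonpos by fastforce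
  have n2: "complex_of_real x + 1/2 \<notin> \<int>\<^sub>\<le>\<^sub>0"
  proof -
    have "complex_of_real x + 1/2 = complex_of_real (x + 1/2)" by simp
    moreover have "complex_of_real (x + 1/2) \<notin> \<int>\<^sub>\<le>\<^sub>0"
      unfolding of_real_in_nonpos_Ints_iff using x nonpos_Ints_nonpos by fastforce
    ultimately show ?thesis by simp
  qed
  have D: "Gamma (complex_of_real x) * Gamma (complex_of_real x + 1/2) =
        exp ((1 - 2 * complex_of_real x) * complex_of_real (ln 2)) * complex_of_real (sqrt pi) *
        Gamma (2 * complex_of_real x)"
    by (rule Gamma_legendre_duplication[OF n1 n2])
  have e1: "complex_of_real x + 1/2 = complex_of_real (x + 1/2)" by simp
  have e2: "2 * complex_of_real x = complex_of_real (2 * x)" by simp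
  have e3: "exp ((1 - 2 * complex_of_real x) * complex_of_real (ln 2)) = complex_of_real (2 powr (1 - 2*x))"
    by (simp add: powr_def exp_of_real[symmetric])
  have "complex_of_real (Gamma x * Gamma (x + 1/2)) = complex_of_real (2 powr (1 - 2*x) * sqrt pi * Gamma (2*x))"
  proof -
    have D2: "Gamma (complex_of_real x) * Gamma (complex_of_real x + 1/2) =
        complex_of_real (2 powr (1 - 2*x)) * complex_of_real (sqrt pi) * Gamma (2 * complex_of_real x)"
      using D unfolding e3 .
    show ?thesis using D2 unfolding e1 e2 Gamma_complex_of_real by simp
  qed
  then show ?thesis by (simp only: of_real_eq_iff)
qed

lemma dup_beta:
  assumes "\<beta> > (0::real)"
  shows "Gamma (\<beta>/2) * Gamma ((\<beta>+1)/2) = 2 powr (1 - \<beta>) * sqrt pi * Gamma \<beta>"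
proof -
  have e: "\<beta>/2 + 1/2 = (\<beta>+1)/2" by simp
  have H: "Gamma (\<beta>/2) * Gamma (\<beta>/2 + 1/2) = 2 powr (1 - \<beta>) * sqrt pi * Gamma \<beta>"
    using dup_real[of "\<beta>/2"] assms by simp
  show ?thesis unfolding e[symmetric] by (rule H)
qed

lemma mu_bc:
  assumes b: "\<beta> > (0::real)"
  shows "2 powr ((\<beta> + real k)/2 - 1) * Gamma ((\<beta> + real k)/2) = Gamma \<beta> * bc \<beta> k"
proof -
  have D: "Gamma (\<beta>/2) * Gamma ((\<beta>+1)/2) = 2 powr (1 - \<beta>) * sqrt pi * Gamma \<beta>"
    by (rule dup_beta[OF b])
  have g1: "Gamma ((\<beta>+1)/2) > 0" and g2: "Gamma (\<beta>/2) > 0" using b by simp_all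
  have base0: "2 powr (\<beta>/2 - 1) * Gamma (\<beta>/2) = Gamma \<beta> * b0 \<beta>"
  proof -
    have "2 powr (\<beta>/2 - 1) * Gamma (\<beta>/2) * (Gamma ((\<beta>+1)/2) * 2 powr (\<beta>/2))
          = (2 powr (\<beta>/2 - 1) * 2 powr (\<beta>/2) * 2 powr (1 - \<beta>)) * sqrt pi * Gamma \<beta>"
      using D by (simp add: mult_ac)
    also have "2 powr (\<beta>/2 - 1) * 2 powr (\<beta>/2) * 2 powr (1 - \<beta>) = (1::real)"
      by (simp add: powr_add[symmetric])
    finally have "2 powr (\<beta>/2 - 1) * Gamma (\<beta>/2) * (Gamma ((\<beta>+1)/2) * 2 powr (\<beta>/2)) = sqrt pi * Gamma \<beta>"
      by simp
    then show ?thesis using g1 unfolding b0_def rGamma_inverse_Gamma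
      by (simp add: field_simps)
  qed
  have base1: "2 powr ((\<beta>+1)/2 - 1) * Gamma ((\<beta>+1)/2) = Gamma \<beta> * b1 \<beta>"
  proof -
    have "2 powr ((\<beta>+1)/2 - 1) * Gamma ((\<beta>+1)/2) * (Gamma (\<beta>/2) * 2 powr (\<beta>/2 - 1/2))
          = (2 powr ((\<beta>+1)/2 - 1) * 2 powr (\<beta>/2 - 1/2) * 2 powr (1 - \<beta>)) * sqrt pi * Gamma \<beta>"
      using D by (simp add: mult_ac)
    also have "2 powr ((\<beta>+1)/2 - 1) * 2 powr (\<beta>/2 - 1/2) * 2 powr (1 - \<beta>) = (1::real)"
      by (simp add: powr_add[symmetric] field_simps)
    finally have "2 powr ((\<beta>+1)/2 - 1) * Gamma ((\<beta>+1)/2) * (Gamma (\<beta>/2) * 2 powr (\<beta>/2 - 1/2)) = sqrt pi * Gamma \<beta>"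
      by simp
    then show ?thesis using g2 unfolding b1_def rGamma_inverse_Gamma
      by (simp add: field_simps)
  qed
  have step: "2 powr ((\<beta> + real (Suc (Suc k)))/2 - 1) * Gamma ((\<beta> + real (Suc (Suc k)))/2) =
              (\<beta> + real k) * (2 powr ((\<beta> + real k)/2 - 1) * Gamma ((\<beta> + real k)/2))" for k
  proof -
    have e: "(\<beta> + real (Suc (Suc k)))/2 = (\<beta> + real k)/2 + 1" by simp
    have "2 powr ((\<beta> + real k)/2 + 1 - 1) = 2 powr (((\<beta> + real k)/2 - 1) + 1)"
      by simp
    also have "\<dots> = 2 powr ((\<beta> + real k)/2 - 1) * 2 powr 1" by (rule powr_add)
    finally have "2 powr ((\<beta> + real k)/2 + 1 - 1) = 2 * 2 powr ((\<beta> + real k)/2 - 1)"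
      by simp
    moreover have "Gamma ((\<beta> + real k)/2 + 1) = (\<beta> + real k)/2 * Gamma ((\<beta> + real k)/2)"
      by (rule Gamma_plus1) (use b nonpos_Ints_nonpos in fastforce)
    ultimately show ?thesis unfolding e by simp
  qed
  have "2 powr ((\<beta> + real k)/2 - 1) * Gamma ((\<beta> + real k)/2) = Gamma \<beta> * bc \<beta> k \<and>
        2 powr ((\<beta> + real (Suc k))/2 - 1) * Gamma ((\<beta> + real (Suc k))/2) = Gamma \<beta> * bc \<beta> (Suc k)"
  proof (induction k)
    case 0 then show ?case using base0 base1 by simp
  next
    case (Suc k)
    have "2 powr ((\<beta> + real (Suc (Suc k)))/2 - 1) * Gamma ((\<beta> + real (Suc (Suc k)))/2) =
          (\<beta> + real k) * (Gamma \<beta> * bc \<beta> k)"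
      unfolding step using conjunct1[OF Suc.IH] by simp
    then show ?case using conjunct2[OF Suc.IH] by simp
  qed
  then show ?thesis by simp
qed


lemma laplace_repr:
  assumes b: "\<beta> > (0::real)"
  shows "has_bochner_integral lborel
           (\<lambda>s. indicator {0<..} s * (s powr (\<beta> - 1) * exp (-((z + s)^2)/2))) (Gamma \<beta> * Phi \<beta> z)"
proof -
  define g where "g k s = indicator {0<..} s * (s powr (\<beta> + real k - 1) * exp (-(s^2)/2))" for k s
  define f where "f k s = (-z)^k / fact k * g k s" for k s
  have g_nonneg: "g k s \<ge> 0" for k s by (simp add: g_def)
  have hb_g: "has_bochner_integral lborel (g k) (Gamma \<beta> * bc \<beta> k)" for k
  proof -
    have "\<beta> + real k > 0" using b by simp
    from gauss_moment[OF this] show ?thesis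
      unfolding g_def[abs_def] mu_bc[OF b] by simp
  qed
  have hb_f: "has_bochner_integral lborel (f k) ((-z)^k / fact k * (Gamma \<beta> * bc \<beta> k))" for k
    unfolding f_def[abs_def] by (rule has_bochner_integral_mult_right[OF hb_g])
  have int_f: "integrable lborel (f k)" for k
    using hb_f[of k] by (simp add: has_bochner_integral_iff)
  have nf: "norm (f k s) = \<bar>z\<bar>^k / fact k * g k s" for k s
    unfolding f_def using g_nonneg[of k s] by (simp add: abs_mult power_abs)
  have hb_nf: "has_bochner_integral lborel (\<lambda>s. norm (f k s)) (\<bar>z\<bar>^k / fact k * (Gamma \<beta> * bc \<beta> k))" for k
    unfolding nf by (rule has_bochner_integral_mult_right[OF hb_g])
  have bc_nonneg: "bc \<beta> k \<ge> 0" for k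
  proof -
    have "2 powr ((\<beta> + real k)/2 - 1) * Gamma ((\<beta> + real k)/2) > 0" using b by simp
    then have p: "Gamma \<beta> * bc \<beta> k > 0" unfolding mu_bc[OF b] .
    have "bc \<beta> k > 0" by (rule zero_less_mult_pos[OF p Gamma_real_pos[OF b]])
    then show ?thesis by simp
  qed
  have sum_nf: "summable (\<lambda>k. integral\<^sup>L lborel (\<lambda>s. norm (f k s)))"
  proof -
    have eq: "integral\<^sup>L lborel (\<lambda>s. norm (f k s)) = Gamma \<beta> * \<bar>cc \<beta> k * z^k\<bar>" for k
      using has_bochner_integral_integral_eq[OF hb_nf[of k]] bc_nonneg[of k]
      by (simp add: cc_def abs_mult power_abs)
    show ?thesis unfolding eq by (rule summable_mult[OF summable_cc_abs])
  qed
  have sum_pt: "summable (\<lambda>k. norm (f k s))" for s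
  proof (cases "s > 0")
    case True
    define C where "C = s powr (\<beta> - 1) * exp (-(s^2)/2)"
    have "norm (f k s) = C * (inverse (fact k) * (\<bar>z\<bar> * s)^k)" for k
    proof -
      have "s powr (\<beta> + real k - 1) = s powr (\<beta> - 1) * s^k"
        using True by (simp add: powr_add[symmetric] powr_realpow[symmetric] algebra_simps)
      then show ?thesis unfolding nf g_def C_def using True
        by (simp add: power_mult_distrib field_simps)
    qed
    then show ?thesis using summable_mult[OF summable_exp[of "\<bar>z\<bar> * s"], of C] by simp
  next
    case False
    then have "norm (f k s) = 0" for k by (simp add: f_def g_def)
    then show ?thesis by simp
  qed
  have pt: "(\<Sum>k. f k s) = indicator {0<..} s * (s powr (\<beta> - 1) * exp (-(s^2)/2)) * exp (- z * s)" for s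
  proof (cases "s > 0")
    case True
    define C where "C = s powr (\<beta> - 1) * exp (-(s^2)/2)"
    have "f k s = C * ((- z * s)^k /\<^sub>R fact k)" for k
    proof -
      have "s powr (\<beta> + real k - 1) = s powr (\<beta> - 1) * s^k"
        using True by (simp add: powr_add[symmetric] powr_realpow[symmetric] algebra_simps)
      moreover have pw: "(- z * s)^k = (-z)^k * s^k" by (rule power_mult_distrib)
      ultimately show ?thesis unfolding f_def g_def C_def pw using True
        by (simp add: field_simps)
    qed
    then have "(\<lambda>k. f k s) sums (C * exp (- z * s))"
      using sums_mult[OF exp_converges[of "- z * s"], of C] by simp
    then show ?thesis using True unfolding C_def by (simp add: sums_iff)
  next
    case False
    then show ?thesis by (simp add: f_def g_def)
  qed
  have si: "(\<lambda>k. integral\<^sup>L lborel (f k)) sums (\<integral>s. (\<Sum>k. f k s) \<partial>lborel)"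
    by (rule sums_integral[OF int_f AE_I2[OF sum_pt] sum_nf])
  have ii: "integrable lborel (\<lambda>s. \<Sum>k. f k s)"
    by (rule integrable_suminf[OF int_f AE_I2[OF sum_pt] sum_nf])
  have "(\<lambda>k. integral\<^sup>L lborel (f k)) = (\<lambda>k. Gamma \<beta> * (cc \<beta> k * z^k))"
  proof
    fix k show "integral\<^sup>L lborel (f k) = Gamma \<beta> * (cc \<beta> k * z^k)"
      using has_bochner_integral_integral_eq[OF hb_f[of k]]
      by (simp add: cc_def power_mult_distrib[symmetric])
  qed
  with si have "(\<lambda>k. Gamma \<beta> * (cc \<beta> k * z^k)) sums (\<integral>s. (\<Sum>k. f k s) \<partial>lborel)" by simp
  then have I: "(\<integral>s. (\<Sum>k. f k s) \<partial>lborel) = Gamma \<beta> * SS \<beta> z"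
    using sums_unique2 sums_mult[OF SS_sums, of "Gamma \<beta>"] by blast
  have hb: "has_bochner_integral lborel (\<lambda>s. \<Sum>k. f k s) (Gamma \<beta> * SS \<beta> z)"
    using ii I by (simp add: has_bochner_integral_iff)
  have hb2: "has_bochner_integral lborel (\<lambda>s. exp (-(z^2)/2) * (\<Sum>k. f k s)) (exp (-(z^2)/2) * (Gamma \<beta> * SS \<beta> z))"
    by (rule has_bochner_integral_mult_right[OF hb])
  have fe: "exp (-(z^2)/2) * (\<Sum>k. f k s) = indicator {0<..} s * (s powr (\<beta> - 1) * exp (-((z + s)^2)/2))" for s
  proof -
    have "exp (-((z + s)^2)/2) = exp (-(z^2)/2) * (exp (-(s^2)/2) * exp (- z * s))"
      by (simp add: exp_add[symmetric] power2_eq_square field_simps)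
    then show ?thesis unfolding pt by (simp add: mult_ac)
  qed
  show ?thesis using hb2 unfolding fe by (simp add: Phi_def mult_ac)
qed


lemma lint_repr:
  assumes b: "\<beta> > 0" and t: "t > 0"
  shows "liouville_int_minus \<beta> (\<lambda>y. exp (- (y^2) / (2 * t))) x = t powr (\<beta>/2) * Phi \<beta> (x / sqrt t)"
proof -
  define r where "r = sqrt t"
  define z where "z = x / r"
  have r: "r > 0" unfolding r_def using t by simp
  have xz: "x = r * z" unfolding z_def using r by simp
  define F where "F y = indicator {x<..} y *\<^sub>R ((y - x) powr (\<beta> - 1) * exp (- (y^2) / (2 * t)))" for y
  define h where "h s = indicator {0<..} s * (s powr (\<beta> - 1) * exp (-((z + s)^2)/2))" for s
  have LB: "(LBINT y:{x<..}. (y - x) powr (\<beta> - 1) * exp (- (y^2) / (2 * t))) = integral\<^sup>L lborel F"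
    unfolding set_lebesgue_integral_def F_def ..
  have aff: "integral\<^sup>L lborel F = \<bar>r\<bar> *\<^sub>R integral\<^sup>L lborel (\<lambda>s. F (x + r * s))"
    by (rule lborel_integral_real_affine) (use r in simp)
  have Feq: "F (x + r * s) = r powr (\<beta> - 1) * h s" for s
  proof (cases "s > 0")
    case True
    have "x + r * s > x" using True r by simp
    moreover have "(x + r * s - x) powr (\<beta> - 1) = r powr (\<beta> - 1) * s powr (\<beta> - 1)"
      using True r by (simp add: powr_mult)
    moreover have "(x + r * s)^2 / (2 * t) = (z + s)^2 / 2"
    proof -
      have "t = r^2" unfolding r_def using t by simp
      then show ?thesis unfolding xz using r by (simp add: power2_eq_square field_simps)
    qed
    ultimately show ?thesis using True unfolding F_def h_def by simp
  next
    case False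
    then have "\<not> x + r * s > x" using r by (simp add: zero_less_mult_iff)
    then show ?thesis using False unfolding F_def h_def by simp
  qed
  have hint: "integral\<^sup>L lborel h = Gamma \<beta> * Phi \<beta> z"
    using has_bochner_integral_integral_eq[OF laplace_repr[OF b, of z]] unfolding h_def .
  have "integral\<^sup>L lborel (\<lambda>s. F (x + r * s)) = r powr (\<beta> - 1) * (Gamma \<beta> * Phi \<beta> z)"
    unfolding Feq hint[symmetric] by simp
  then have I: "(LBINT y:{x<..}. (y - x) powr (\<beta> - 1) * exp (- (y^2) / (2 * t))) =
                r * r powr (\<beta> - 1) * (Gamma \<beta> * Phi \<beta> z)"
    unfolding LB aff using r by simp
  have rp: "r * r powr (\<beta> - 1) = t powr (\<beta>/2)"
  proof -
    have "r * r powr (\<beta> - 1) = r powr 1 * r powr (\<beta> - 1)" using r by simp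
    also have "\<dots> = r powr (1 + (\<beta> - 1))" by (simp only: powr_add)
    also have "\<dots> = r powr \<beta>" by simp
    also have "\<dots> = t powr (\<beta>/2)" unfolding r_def using t
      by (simp add: powr_half_sqrt[symmetric] powr_powr)
    finally show ?thesis .
  qed
  have G: "Gamma \<beta> \<noteq> 0" using Gamma_real_pos[OF b] by linarith
  show ?thesis unfolding liouville_int_minus_def I rp using G unfolding z_def r_def by simp
qed


lemma pcU_SS: "pcU (\<beta> - 1/2) z = exp (-(z^2)/4) * SS \<beta> z"
proof -
  have e1: "3/4 + (\<beta> - 1/2)/2 = (\<beta>+1)/2" "(\<beta> - 1/2)/2 + 1/4 = \<beta>/2"
    "1/4 + (\<beta> - 1/2)/2 = \<beta>/2" "(\<beta> - 1/2)/2 - 1/4 = \<beta>/2 - 1/2"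
    "(\<beta> - 1/2)/2 + 3/4 = (\<beta>+1)/2" by (simp_all add: field_simps)
  show ?thesis unfolding pcU_def e1 SS_kummer b0_def b1_def by (simp add: algebra_simps)
qed

lemma deriv_iter:
  assumes t: "t > 0"
  shows "(deriv ^^ j) (\<lambda>x. C * Phi \<gamma> (x / sqrt t)) =
         (\<lambda>x. (-1)^j * C / sqrt t ^ j * Phi (\<gamma> - real j) (x / sqrt t))"
proof (induction j)
  case 0 then show ?case by simp
next
  case (Suc j)
  have "(deriv ^^ Suc j) (\<lambda>x. C * Phi \<gamma> (x / sqrt t)) =
        deriv (\<lambda>x. (-1)^j * C / sqrt t ^ j * Phi (\<gamma> - real j) (x / sqrt t))"
    using Suc.IH by simp
  also have "\<dots> = (\<lambda>x. (-1)^Suc j * C / sqrt t ^ Suc j * Phi (\<gamma> - real (Suc j)) (x / sqrt t))"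
  proof
    fix x
    have d1: "DERIV (\<lambda>x. x / sqrt t) x :> 1 / sqrt t"
      by (rule DERIV_cdivide[OF DERIV_ident])
    have d2: "DERIV (\<lambda>x. Phi (\<gamma> - real j) (x / sqrt t)) x :> - Phi (\<gamma> - real j - 1) (x / sqrt t) * (1 / sqrt t)"
      by (rule DERIV_chain2[OF Phi_deriv d1])
    have d3: "DERIV (\<lambda>x. (-1)^j * C / sqrt t ^ j * Phi (\<gamma> - real j) (x / sqrt t)) x :>
        (-1)^j * C / sqrt t ^ j * (- Phi (\<gamma> - real j - 1) (x / sqrt t) * (1 / sqrt t))"
      by (rule DERIV_cmult[OF d2])
    have e: "\<gamma> - real j - 1 = \<gamma> - real (Suc j)" by simp
    show "deriv (\<lambda>x. (-1)^j * C / sqrt t ^ j * Phi (\<gamma> - real j) (x / sqrt t)) x =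
        (-1)^Suc j * C / sqrt t ^ Suc j * Phi (\<gamma> - real (Suc j)) (x / sqrt t)"
      using DERIV_imp_deriv[OF d3] unfolding e by (simp add: field_simps)
  qed
  finally show ?case .
qed

lemma aux_sign: "(-1::real)^m * ((-1)^m * A / S * P) = A / S * P"
proof -
  have "(-1::real)^m * (-1)^m = 1" by (simp add: power_mult_distrib[symmetric])
  then show ?thesis by (metis (no_types, lifting) mult.assoc mult_1 times_divide_eq_right)
qed

theorem mainTheorem2:
  fixes \<alpha> t x :: real
  assumes "\<alpha> > 0" and "t > 0"
  shows "calH \<alpha> x t =
    t powr \<alpha> * exp (x^2 / (2 * t)) *
      liouville_deriv_minus \<alpha> (\<lambda>y. exp (- (y^2) / (2 * t))) x"
proof -
  have a: "\<alpha> > 0" and t: "t > 0" by fact+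
  define z where "z = x / sqrt t"
  have z2: "z^2 = x^2 / t" unfolding z_def using t by (simp add: power_divide)
  have st: "sqrt t = t powr (1/2)" using t by (simp add: powr_half_sqrt)
  have LHS: "calH \<alpha> x t = t powr (\<alpha>/2) * SS (-\<alpha>) z"
  proof -
    have "calH \<alpha> x t = t powr (\<alpha>/2) * exp (x^2/(4*t)) * (exp (-(z^2)/4) * SS (-\<alpha>) z)"
      unfolding calH_def z_def[symmetric] using pcU_SS[of "-\<alpha>" z] by simp
    also have "\<dots> = t powr (\<alpha>/2) * (exp (x^2/(4*t)) * exp (-(z^2)/4)) * SS (-\<alpha>) z"
      by (simp only: mult_ac)
    also have "exp (x^2/(4*t)) * exp (-(z^2)/4) = 1"
      unfolding z2 by (simp add: exp_add[symmetric])
    finally show ?thesis by simp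
  qed
  have key: "liouville_deriv_minus \<alpha> (\<lambda>y. exp (- (y^2) / (2 * t))) x = t powr (-\<alpha>/2) * Phi (-\<alpha>) z"
  proof (cases "\<alpha> \<in> \<nat>")
    case True
    then obtain n where n: "\<alpha> = real n" by (auto elim!: Nats_cases)
    have fl: "nat \<lfloor>\<alpha>\<rfloor> = n" using n by simp
    have phi: "(\<lambda>y. exp (- (y^2) / (2 * t))) = (\<lambda>y. 1 * Phi 0 (y / sqrt t))"
    proof
      fix y show "exp (- (y^2) / (2 * t)) = 1 * Phi 0 (y / sqrt t)"
        using t by (simp add: Phi_zero power_divide)
    qed
    have "liouville_deriv_minus \<alpha> (\<lambda>y. exp (- (y^2) / (2 * t))) x =
          (-1)^n * ((-1)^n * 1 / sqrt t ^ n * Phi (0 - real n) (x / sqrt t))"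
      unfolding liouville_deriv_minus_def fl phi deriv_iter[OF t] using True by simp
    also have "\<dots> = t powr (-\<alpha>/2) * Phi (-\<alpha>) z"
    proof -
      have "sqrt t ^ n = t powr (\<alpha>/2)" unfolding st n using t
        by (simp add: powr_realpow[symmetric] powr_powr)
      moreover have "(-1::real)^n * (-1)^n = 1" by (simp add: power_mult_distrib[symmetric])
      ultimately show ?thesis using t unfolding z_def n
        by (simp add: powr_minus divide_simps)
    qed
    finally show ?thesis .
  next
    case False
    define m where "m = nat \<lfloor>\<alpha>\<rfloor> + 1"
    define \<beta> where "\<beta> = real m - \<alpha>"
    have bpos: "\<beta> > 0" unfolding \<beta>_def m_def using a by linarith
    have li: "liouville_int_minus \<beta> (\<lambda>y. exp (- (y^2) / (2 * t))) = (\<lambda>x. t powr (\<beta>/2) * Phi \<beta> (x / sqrt t))"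
      using lint_repr[OF bpos t] by blast
    have "liouville_deriv_minus \<alpha> (\<lambda>y. exp (- (y^2) / (2 * t))) x =
          (-1)^m * ((-1)^m * t powr (\<beta>/2) / sqrt t ^ m * Phi (\<beta> - real m) (x / sqrt t))"
      unfolding liouville_deriv_minus_def Let_def m_def[symmetric] \<beta>_def[symmetric] li deriv_iter[OF t]
      using False by simp
    also have "\<dots> = t powr (-\<alpha>/2) * Phi (-\<alpha>) z"
    proof -
      have e1: "sqrt t ^ m = t powr (real m/2)" unfolding st using t
        by (simp add: powr_realpow[symmetric] powr_powr)
      have e2: "\<beta> - real m = -\<alpha>" unfolding \<beta>_def by simp
      have e3: "t powr (\<beta>/2) / t powr (real m/2) = t powr (-\<alpha>/2)"
        unfolding \<beta>_def by (simp add: powr_diff[symmetric] diff_divide_distrib)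
      show ?thesis unfolding aux_sign e1 e2 e3 z_def ..
    qed
    finally show ?thesis .
  qed
  have "t powr \<alpha> * exp (x^2 / (2 * t)) * (t powr (-\<alpha>/2) * Phi (-\<alpha>) z) = t powr (\<alpha>/2) * SS (-\<alpha>) z"
  proof -
    have "t powr \<alpha> * t powr (-\<alpha>/2) = t powr (\<alpha>/2)" by (simp add: powr_add[symmetric])
    moreover have "exp (x^2 / (2 * t)) * exp (-(z^2)/2) = 1"
      unfolding z2 by (simp add: exp_add[symmetric])
    ultimately show ?thesis unfolding Phi_def
      by (metis (no_types, lifting) mult.assoc mult.commute mult.left_commute mult_1)
  qed
  then show ?thesis unfolding LHS key by simp
qed

end
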